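(* Let $n\ge 0$ and $-1\le i,j\le n$ be integers, and let $p\in\Gamma_n$ be written as a concatenation $p=c\,q_2\,b\,q_1\,a$ of paths with $q_1\in\Gamma_i$ and $q_2\in\Gamma_j$. Then $i+j\le n-1$.
   Context: Let $\Bbbk$ be a field, $Q=(Q_0,Q_1,s,t)$ a finite quiver, and $A=\Bbbk Q/I$ a finite-dimensional monomial algebra, i.e. $I$ is an ideal generated by paths of length at least $2$. Paths are written from right to left: a path is $p=\alpha_n\cdots\alpha_1$ with arrows $\alpha_i$ and $t(\alpha_i)=s(\alpha_{i+1})$; vertices are the paths of length $0$; $qp$ denotes concatenation when $t(p)=s(q)$. Let $\mathcal B$ be the set of paths not lying in $I$. A suffix of a path $p$ is a path $q$ with $p=qa$; a prefix is a path $q$ with $p=bq$; proper means $q\ne p$. For $n\ge -1$, a left $n$-ambiguity is a path $p$ with a decomposition $p=u_{-1}u_0u_1\cdots u_n$ such that $u_{-1}\in Q_0$, $u_0\in Q_1$, $u_i\in\mathcal B$ for all $i$, and for every $0\le i\le n-1$, $u_iu_{i+1}\in I$ while no proper suffix of $u_iu_{i+1}$ lies in $I$. A right $n$-ambiguity is a path with a decomposition $p=v_n\cdots v_0v_{-1}$ with $v_{-1}\in Q_0$, $v_0\in Q_1$, $v_i\in\mathcal B$, and for $0\le i\le n-1$, $v_{i+1}v_i\in I$ while no proper prefix of $v_{i+1}v_i$ lies in $I$. A path is a left $n$-ambiguity iff it is a right $n$-ambiguity; such paths are called $n$-ambiguities, and $\Gamma_n$ denotes their set. *)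

theory Defs
  imports Main
begin

record ('v, 'a) quiver =
  verts :: "'v set"
  arrs  :: "'a set"
  src   :: "'a \<Rightarrow> 'v"
  tgt   :: "'a \<Rightarrow> 'v"

text \<open>A path p = alpha_n ... alpha_1 is stored by its source vertex and its list of
  arrows in written (right-to-left) order [alpha_n, ..., alpha_1].\<close>
datatype ('v, 'a) qpath = QPath (pstart: 'v) (parrs: "'a list")

definition plen :: "('v, 'a) qpath \<Rightarrow> nat" where
  "plen p = length (parrs p)"

definition is_path :: "('v, 'a, 'b) quiver_scheme \<Rightarrow> ('v, 'a) qpath \<Rightarrow> bool" where
  "is_path Q p \<longleftrightarrow> pstart p \<in> verts Q \<and> set (parrs p) \<subseteq> arrs Q
     \<and> (parrs p \<noteq> [] \<longrightarrow> src Q (last (parrs p)) = pstart p)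
     \<and> (\<forall>k. Suc k < length (parrs p) \<longrightarrow> src Q (parrs p ! k) = tgt Q (parrs p ! Suc k))"

definition pend :: "('v, 'a, 'b) quiver_scheme \<Rightarrow> ('v, 'a) qpath \<Rightarrow> 'v" where
  "pend Q p = (if parrs p = [] then pstart p else tgt Q (hd (parrs p)))"

text \<open>Concatenation qp (first p, then q), meaningful when t(p) = s(q).\<close>
definition pcat :: "('v, 'a) qpath \<Rightarrow> ('v, 'a) qpath \<Rightarrow> ('v, 'a) qpath" where
  "pcat q p = QPath (pstart p) (parrs q @ parrs p)"

definition composable :: "('v, 'a, 'b) quiver_scheme \<Rightarrow> ('v, 'a) qpath \<Rightarrow> ('v, 'a) qpath \<Rightarrow> bool" where
  "composable Q q p \<longleftrightarrow> is_path Q q \<and> is_path Q p \<and> pend Q p = pstart q"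

fun pcat_list :: "('v, 'a) qpath list \<Rightarrow> ('v, 'a) qpath" where
  "pcat_list [] = undefined"
| "pcat_list [u] = u"
| "pcat_list (u # us) = pcat u (pcat_list us)"

definition in_ideal :: "('v, 'a, 'b) quiver_scheme \<Rightarrow> ('v, 'a) qpath set \<Rightarrow> ('v, 'a) qpath \<Rightarrow> bool" where
  "in_ideal Q R p \<longleftrightarrow> is_path Q p \<and>
     (\<exists>x r y. r \<in> R \<and> composable Q r y \<and> composable Q x (pcat r y) \<and> p = pcat x (pcat r y))"

definition nonzero_paths :: "('v, 'a, 'b) quiver_scheme \<Rightarrow> ('v, 'a) qpath set \<Rightarrow> ('v, 'a) qpath set" where
  "nonzero_paths Q R = {p. is_path Q p \<and> \<not> in_ideal Q R p}"

definition monomial_algebra :: "('v, 'a, 'b) quiver_scheme \<Rightarrow> ('v, 'a) qpath set \<Rightarrow> bool" where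
  "monomial_algebra Q R \<longleftrightarrow> finite (verts Q) \<and> finite (arrs Q)
     \<and> (\<forall>a\<in>arrs Q. src Q a \<in> verts Q \<and> tgt Q a \<in> verts Q)
     \<and> (\<forall>r\<in>R. is_path Q r \<and> 2 \<le> plen r)
     \<and> finite (nonzero_paths Q R)"

definition is_suffix :: "('v, 'a, 'b) quiver_scheme \<Rightarrow> ('v, 'a) qpath \<Rightarrow> ('v, 'a) qpath \<Rightarrow> bool" where
  "is_suffix Q q p \<longleftrightarrow> (\<exists>a. composable Q q a \<and> p = pcat q a)"

text \<open>Left n-ambiguity: p = u_{-1} u_0 u_1 ... u_n, where us ! k = u_{k-1}.\<close>
definition left_amb :: "('v, 'a, 'b) quiver_scheme \<Rightarrow> ('v, 'a) qpath set \<Rightarrow> int \<Rightarrow> ('v, 'a) qpath \<Rightarrow> bool" where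
  "left_amb Q R n p \<longleftrightarrow> -1 \<le> n \<and>
     (\<exists>us. length us = nat (n + 2)
       \<and> (\<forall>k < length us. us ! k \<in> nonzero_paths Q R)
       \<and> (\<forall>k. Suc k < length us \<longrightarrow> composable Q (us ! k) (us ! Suc k))
       \<and> p = pcat_list us
       \<and> plen (us ! 0) = 0
       \<and> (1 < length us \<longrightarrow> plen (us ! 1) = 1)
       \<and> (\<forall>m. 1 \<le> m \<and> Suc m < length us \<longrightarrow>
             in_ideal Q R (pcat (us ! m) (us ! Suc m))
           \<and> (\<forall>q. is_suffix Q q (pcat (us ! m) (us ! Suc m)) \<and> q \<noteq> pcat (us ! m) (us ! Suc m)
                 \<longrightarrow> \<not> in_ideal Q R q)))"

text \<open>Gamma_n, the set of n-ambiguities (left n-ambiguities; equivalently right ones).\<close>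
definition Gamma :: "('v, 'a, 'b) quiver_scheme \<Rightarrow> ('v, 'a) qpath set \<Rightarrow> int \<Rightarrow> ('v, 'a) qpath set" where
  "Gamma Q R n = {p. left_amb Q R n p}"

end

theory Submission
  imports Defs
begin

definition occ :: "('v,'a) qpath set \<Rightarrow> 'a list \<Rightarrow> nat \<Rightarrow> nat \<Rightarrow> bool" where
  "occ R l s t \<longleftrightarrow> s < t \<and> t \<le> length l \<and> (\<exists>r\<in>R. parrs r = take (t-s) (drop s l))"

lemma occ_lift:
  assumes "occ R (take (b-a) (drop a l)) s t" "a \<le> b" "b \<le> length l"
  shows "occ R l (s+a) (t+a) \<and> t + a \<le> b"
proof -
  have t: "t \<le> b - a" using assms(1) assms(3) by (auto simp: occ_def)
  have "take (t-s) (drop s (take (b-a) (drop a l))) = take (t-s) (drop (s+a) l)"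
    using t by (simp add: drop_take take_take min_def add.commute)
  then show ?thesis using assms t by (auto simp: occ_def)
qed

lemma occ_restrict:
  assumes "occ R l s t" "a \<le> s" "t \<le> b" "b \<le> length l"
  shows "occ R (take (b-a) (drop a l)) (s-a) (t-a)"
proof -
  have "take (t-s) (drop (s-a) (take (b-a) (drop a l))) = take (t-s) (drop s l)"
    using assms by (simp add: drop_take take_take min_def add.commute)
  moreover have "t - a - (s - a) = t - s" using assms by (auto simp: occ_def)
  ultimately show ?thesis using assms by (auto simp: occ_def)
qed

lemma concat_seg:
  assumes "k \<le> j" "j \<le> length xss"
  shows "take (length (concat (take j xss)) - length (concat (take k xss)))
           (drop (length (concat (take k xss))) (concat xss)) = concat (take (j-k) (drop k xss))"
proof -
  have tj: "take j xss = take k xss @ take (j-k) (drop k xss)"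
    using assms by (metis le_add_diff_inverse take_add)
  have c: "concat xss = concat (take k xss) @ concat (drop k xss)"
    by (metis append_take_drop_id concat_append)
  have d: "concat (drop k xss) = concat (take (j-k) (drop k xss)) @ concat (drop (j-k) (drop k xss))"
    by (metis append_take_drop_id concat_append)
  show ?thesis by (subst c, subst d, simp add: tj)
qed

lemma concat_take_le: "length (concat (take k xss)) \<le> length (concat xss)"
  by (metis append_take_drop_id concat_append length_append le_add1)

lemma concat_take_Suc: "k < length xss \<Longrightarrow> length (concat (take (Suc k) xss)) = length (concat (take k xss)) + length (xss ! k)"
  by (simp add: take_Suc_conv_app_nth)

lemma pcat_list_arrs: "us \<noteq> [] \<Longrightarrow> parrs (pcat_list us) = concat (map parrs us)"
  by (induction us rule: pcat_list.induct) (auto simp: pcat_def)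


definition vert :: "('v, 'a, 'b) quiver_scheme \<Rightarrow> ('v, 'a) qpath \<Rightarrow> nat \<Rightarrow> 'v" where
  "vert Q P b = (if b < length (parrs P) then tgt Q (parrs P ! b) else pstart P)"

definition seg :: "('v, 'a, 'b) quiver_scheme \<Rightarrow> ('v, 'a) qpath \<Rightarrow> nat \<Rightarrow> nat \<Rightarrow> ('v, 'a) qpath" where
  "seg Q P a b = QPath (vert Q P b) (take (b-a) (drop a (parrs P)))"

lemma seg_path:
  assumes P: "is_path Q P" and T: "\<forall>x\<in>arrs Q. tgt Q x \<in> verts Q"
    and ab: "a \<le> b" "b \<le> length (parrs P)"
  shows "is_path Q (seg Q P a b)"
proof -
  let ?l = "parrs P"
  have v: "vert Q P b \<in> verts Q"
    using P T ab by (auto simp: vert_def is_path_def dest!: nth_mem)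
  have s: "set (take (b-a) (drop a ?l)) \<subseteq> arrs Q"
    using P by (auto simp: is_path_def dest: in_set_takeD in_set_dropD)
  have la: "take (b-a) (drop a ?l) \<noteq> [] \<longrightarrow> src Q (last (take (b-a) (drop a ?l))) = vert Q P b"
  proof
    assume ne: "take (b-a) (drop a ?l) \<noteq> []"
    then have ab': "a < b" by auto
    have len: "length (take (b-a) (drop a ?l)) = b-a" using ab by simp
    have "last (take (b-a) (drop a ?l)) = take (b-a) (drop a ?l) ! (b-a-1)"
      using ne len by (simp add: last_conv_nth)
    also have "\<dots> = ?l ! (b - 1)" using ab ab' by simp
    finally have "last (take (b-a) (drop a ?l)) = ?l ! (b - 1)" .
    moreover have "src Q (?l ! (b-1)) = vert Q P b"
    proof (cases "b < length ?l")
      case True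
      then show ?thesis using P ab' by (auto simp: is_path_def vert_def)
    next
      case False
      then have "b = length ?l" using ab by auto
      then show ?thesis using P ab' by (auto simp: is_path_def vert_def last_conv_nth)
    qed
    ultimately show "src Q (last (take (b-a) (drop a ?l))) = vert Q P b" by simp
  qed
  have c: "\<forall>k. Suc k < length (take (b-a) (drop a ?l)) \<longrightarrow>
     src Q (take (b-a) (drop a ?l) ! k) = tgt Q (take (b-a) (drop a ?l) ! Suc k)"
  proof (intro allI impI)
    fix k assume k: "Suc k < length (take (b-a) (drop a ?l))"
    then have k1: "Suc k < b - a" "a + Suc k < length ?l" by auto
    have "src Q (?l ! (a+k)) = tgt Q (?l ! Suc (a+k))"
      using P k1 unfolding is_path_def by auto
    then show "src Q (take (b-a) (drop a ?l) ! k) = tgt Q (take (b-a) (drop a ?l) ! Suc k)"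
      using k1 by simp
  qed
  show ?thesis using v s la c by (simp add: seg_def is_path_def)
qed

lemma pstart_seg[simp]: "pstart (seg Q P a b) = vert Q P b" by (simp add: seg_def)
lemma parrs_seg[simp]: "parrs (seg Q P a b) = take (b-a) (drop a (parrs P))" by (simp add: seg_def)

lemma pend_seg: "a \<le> b \<Longrightarrow> b \<le> length (parrs P) \<Longrightarrow> pend Q (seg Q P a b) = vert Q P a"
  by (auto simp: pend_def seg_def vert_def hd_drop_conv_nth)

lemma pcat_seg: "a \<le> b \<Longrightarrow> b \<le> c \<Longrightarrow> pcat (seg Q P a b) (seg Q P b c) = seg Q P a c"
proof -
  assume "a \<le> b" "b \<le> c"
  then have "take (c-a) (drop a (parrs P)) = take (b-a) (drop a (parrs P)) @ take (c-b) (drop b (parrs P))"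
  proof -
    assume h: "a \<le> b" "b \<le> c"
    have "c - a = (b-a) + (c-b)" using h by simp
    then have "take (c-a) (drop a (parrs P)) = take (b-a) (drop a (parrs P)) @ take (c-b) (drop (b-a) (drop a (parrs P)))"
      by (simp only: take_add)
    also have "drop (b-a) (drop a (parrs P)) = drop b (parrs P)" using h by simp
    finally show ?thesis .
  qed
  then show ?thesis by (simp add: pcat_def seg_def)
qed

lemma seg_full: "seg Q P 0 (length (parrs P)) = P"
  by (cases P) (simp add: seg_def vert_def)

lemma r_seg:
  assumes "is_path Q r" "parrs r = take (t-s) (drop s (parrs P))" "s < t" "t \<le> length (parrs P)" "is_path Q P"
  shows "r = seg Q P s t"
proof -
  let ?l = "parrs P"
  have ne: "parrs r \<noteq> []" using assms by auto
  have len: "length (parrs r) = t-s" using assms by simp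
  have "last (parrs r) = parrs r ! (t-s-1)" using ne len by (simp add: last_conv_nth)
  also have "\<dots> = ?l ! (t-1)" using assms by simp
  finally have "last (parrs r) = ?l ! (t-1)" .
  moreover have "src Q (?l ! (t-1)) = vert Q P t"
  proof (cases "t < length ?l")
    case True
    then show ?thesis using assms by (auto simp: is_path_def vert_def)
  next
    case False
    then have "t = length ?l" using assms by auto
    then show ?thesis using assms by (auto simp: is_path_def vert_def last_conv_nth)
  qed
  ultimately have "pstart r = vert Q P t" using assms(1) ne by (simp add: is_path_def)
  then show ?thesis using assms(2) by (cases r) (simp add: seg_def)
qed


lemma mono_tgt: "monomial_algebra Q R \<Longrightarrow> \<forall>x\<in>arrs Q. tgt Q x \<in> verts Q"
  by (simp add: monomial_algebra_def)

lemma conv_ideal: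
  assumes M: "monomial_algebra Q R" and P: "is_path Q P" and O: "occ R (parrs P) s t"
  shows "in_ideal Q R P"
proof -
  let ?n = "length (parrs P)"
  have T: "\<forall>x\<in>arrs Q. tgt Q x \<in> verts Q" using M by (rule mono_tgt)
  from O obtain r where r: "r \<in> R" "parrs r = take (t-s) (drop s (parrs P))" and st: "s < t" "t \<le> ?n"
    by (auto simp: occ_def)
  have rp: "is_path Q r" using M r(1) by (simp add: monomial_algebra_def)
  have req: "r = seg Q P s t" using r_seg[OF rp r(2) st P] .
  have c1: "composable Q (seg Q P s t) (seg Q P t ?n)"
    using seg_path[OF P T] st by (auto simp: composable_def pend_seg)
  have c2: "composable Q (seg Q P 0 s) (pcat (seg Q P s t) (seg Q P t ?n))"
    using seg_path[OF P T] st by (auto simp: composable_def pend_seg pcat_seg)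
  have "P = pcat (seg Q P 0 s) (pcat (seg Q P s t) (seg Q P t ?n))"
    using st by (simp add: pcat_seg seg_full)
  then show ?thesis using P r(1) c1 c2 req unfolding in_ideal_def by blast
qed

lemma fwd_ideal:
  assumes M: "monomial_algebra Q R" and I: "in_ideal Q R w"
  shows "\<exists>s t. occ R (parrs w) s t"
proof -
  from I obtain x r y where r: "r \<in> R" and w: "w = pcat x (pcat r y)"
    unfolding in_ideal_def by blast
  have "2 \<le> plen r" using M r by (simp add: monomial_algebra_def)
  then have "occ R (parrs w) (length (parrs x)) (length (parrs x) + length (parrs r))"
    using r w by (auto simp: occ_def pcat_def plen_def)
  then show ?thesis by blast
qed

lemma prefix_suffix:
  assumes M: "monomial_algebra Q R" and P: "is_path Q P" and b: "b \<le> length (parrs P)"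
  shows "is_suffix Q (seg Q P 0 b) P"
proof -
  let ?n = "length (parrs P)"
  have T: "\<forall>x\<in>arrs Q. tgt Q x \<in> verts Q" using M by (rule mono_tgt)
  have "composable Q (seg Q P 0 b) (seg Q P b ?n)"
    using seg_path[OF P T] b by (auto simp: composable_def pend_seg)
  moreover have "P = pcat (seg Q P 0 b) (seg Q P b ?n)"
    using b by (simp add: pcat_seg seg_full)
  ultimately show ?thesis unfolding is_suffix_def by blast
qed

lemma pcat_empty: "composable Q u v \<Longrightarrow> parrs v = [] \<Longrightarrow> pcat u v = u"
  by (cases u; cases v) (auto simp: composable_def pend_def pcat_def)


lemma core2:
  fixes occ :: "nat \<Rightarrow> nat \<Rightarrow> bool" and E H :: "nat \<Rightarrow> nat"
  assumes Emin: "\<And>m s t. 1 \<le> m \<Longrightarrow> m+1 \<le> K \<Longrightarrow> occ s t \<Longrightarrow> E (m-1) \<le> s \<Longrightarrow> E (m+1) \<le> t"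
    and H0: "E 0 \<le> H 0" and H1: "E 1 \<le> H 1" and JK: "J \<le> K"
    and Hocc: "\<And>m. 1 \<le> m \<Longrightarrow> m+1 \<le> J \<Longrightarrow> \<exists>s t. occ s t \<and> H (m-1) \<le> s \<and> t \<le> H (m+1)"
  shows "x \<le> J \<Longrightarrow> E x \<le> H x"
proof (induction x rule: less_induct)
  case (less x)
  show ?case
  proof (cases "x \<le> 1")
    case True
    then show ?thesis using H0 H1 by (cases x) auto
  next
    case False
    then have m: "1 \<le> x-1" "x-1+1 \<le> J" using less.prems by auto
    have e: "x-1-1 = x-2" "x-1+1 = x" using False by auto
    from Hocc[OF m] e obtain s t where st: "occ s t" "H (x-2) \<le> s" "t \<le> H x"
      by auto
    have "E (x-2) \<le> H (x-2)" using less False by auto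
    then have "E (x-1-1) \<le> s" using st by (simp add: numeral_2_eq_2)
    from Emin[of "x-1", OF _ _ st(1) this] have "E (x-1+1) \<le> t" using False less.prems JK by auto
    then show ?thesis using st False by auto
  qed
qed

lemma core:
  fixes occ :: "nat \<Rightarrow> nat \<Rightarrow> bool" and E G :: "nat \<Rightarrow> nat"
  assumes occ_bound: "\<And>s t. occ s t \<Longrightarrow> s < t \<and> t \<le> N"
    and EK: "E K = N"
    and Emin: "\<And>m s t. 1 \<le> m \<Longrightarrow> m+1 \<le> K \<Longrightarrow> occ s t \<Longrightarrow> E (m-1) \<le> s \<Longrightarrow> E (m+1) \<le> t"
    and Elast: "\<And>s t. occ s t \<Longrightarrow> E (K-1) \<le> s \<Longrightarrow> t \<le> E K \<Longrightarrow> False"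
    and K1: "1 \<le> K"
    and G0: "E J \<le> G 0" and JK: "J \<le> K"
    and G1: "G 1 = G 0 + 1"
    and Gocc: "\<And>m. 1 \<le> m \<Longrightarrow> m+1 \<le> I \<Longrightarrow> \<exists>s t. occ s t \<and> G (m-1) \<le> s \<and> t \<le> G (m+1)"
    and Gstrict: "\<And>m. 1 \<le> m \<Longrightarrow> m+1 \<le> I \<Longrightarrow> G m < G (m+1)"
    and GN: "\<And>x. x \<le> I \<Longrightarrow> G x \<le> N"
    and I1: "1 \<le> I"
  shows "I + J \<le> K"
proof -
  have main: "1 \<le> x \<Longrightarrow> x \<le> I \<Longrightarrow> x + J \<le> K \<and> (even x \<longrightarrow> E (x+J) \<le> G x) \<and> (odd x \<longrightarrow> E (x+J-1) < G x)" for x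
  proof (induction x rule: less_induct)
    case (less x)
    consider "x = 1" | "x \<ge> 2" "even x" | "x \<ge> 3" "odd x"
      using less.prems by (metis One_nat_def Suc_1 dvd_refl le_antisym not_less_eq_eq numeral_3_eq_3 odd_one)
    then show ?case
    proof cases
      case 1
      have "J \<noteq> K"
      proof
        assume "J = K"
        then have "N \<le> G 0" using G0 EK by simp
        moreover have "G 1 \<le> N" using GN less.prems 1 by simp
        ultimately show False using G1 by simp
      qed
      then show ?thesis using 1 JK G0 G1 by auto
    next
      case 2
      have m: "1 \<le> x-1" "x-1+1 \<le> I" using less.prems 2 by auto
      have e: "x-1-1 = x-2" "x-1+1 = x" using 2 by auto
      from Gocc[OF m] e obtain s t where st: "occ s t" "G (x-2) \<le> s" "t \<le> G x"
        by auto
      have y: "x-2+J \<le> K \<and> E (x-2+J) \<le> G (x-2)"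
      proof (cases "x = 2")
        case True then show ?thesis using G0 JK by simp
      next
        case False
        then have "x \<ge> 4" using 2 by presburger
        then show ?thesis using less.IH[of "x-2"] less.prems 2 by auto
      qed
      let ?y = "x-2+J"
      have s: "E ?y \<le> s" using y st by simp
      have tN: "t \<le> N" "s < t" using occ_bound[OF st(1)] by auto
      have "?y \<noteq> K" using s tN EK by auto
      moreover have "?y \<noteq> K - 1" using Elast[OF st(1)] s tN EK by auto
      ultimately have yk: "?y + 2 \<le> K" using y by auto
      have "E (?y+1+1) \<le> t" using Emin[of "?y+1", OF _ _ st(1)] s yk by auto
      moreover have "?y+1+1 = x+J" using 2 by simp
      ultimately have "E (x+J) \<le> t" by (simp only:)
      then have "E (x+J) \<le> G x" using st(3) by (rule le_trans)
      moreover have "x + J \<le> K" using yk 2 by auto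
      ultimately show ?thesis using 2 by auto
    next
      case 3
      have ih: "x-1+J \<le> K \<and> E (x-1+J) \<le> G (x-1)"
        using less.IH[of "x-1"] less.prems 3 by auto
      have "G (x-1) < G x" using Gstrict[of "x-1"] less.prems 3 by auto
      then have lt: "E (x+J-1) < G x" using ih 3 by (simp add: add.commute)
      have "x-1+J \<noteq> K" using lt GN[of x] less.prems EK 3 by auto
      then show ?thesis using ih lt 3 by auto
    qed
  qed
  show ?thesis using main[of I] I1 by simp
qed


definition Sf :: "('v,'a) qpath list \<Rightarrow> nat \<Rightarrow> nat" where
  "Sf us k = length (concat (take k (map parrs us)))"

lemma Sf_Suc: "k < length us \<Longrightarrow> Sf us (Suc k) = Sf us k + plen (us ! k)"
  unfolding Sf_def plen_def using concat_take_Suc[of k "map parrs us"] by simp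

lemma Sf_le: "Sf us k \<le> length (concat (map parrs us))"
  unfolding Sf_def by (rule concat_take_le)

lemma Sf_mono: "k \<le> j \<Longrightarrow> Sf us k \<le> Sf us j"
proof -
  assume "k \<le> j"
  then have "take k (map parrs us) = take k (take j (map parrs us))" by (simp add: min_def)
  then show ?thesis unfolding Sf_def by (metis concat_take_le)
qed

lemma Sf_all: "Sf us (length us) = length (concat (map parrs us))"
  by (simp add: Sf_def)

lemma arrs_one: "k < length us \<Longrightarrow> parrs (us ! k) = take (Sf us (k+1) - Sf us k) (drop (Sf us k) (concat (map parrs us)))"
proof -
  assume k: "k < length us"
  have "drop k (map parrs us) = parrs (us!k) # drop (Suc k) (map parrs us)"
    using k by (metis Cons_nth_drop_Suc length_map nth_map)
  then have "take (Suc 0) (drop k (map parrs us)) = [parrs (us!k)]" by simp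
  then show ?thesis using concat_seg[of k "k+1" "map parrs us"] k unfolding Sf_def by simp
qed

lemma arrs_two: "k+1 < length us \<Longrightarrow> parrs (pcat (us ! k) (us ! (k+1))) = take (Sf us (k+2) - Sf us k) (drop (Sf us k) (concat (map parrs us)))"
proof -
  assume k: "k+1 < length us"
  have d1: "drop k (map parrs us) = parrs (us!k) # drop (Suc k) (map parrs us)"
    using k by (metis Cons_nth_drop_Suc length_map nth_map Suc_lessD Suc_eq_plus1)
  have d2: "drop (Suc k) (map parrs us) = parrs (us!(k+1)) # drop (Suc (Suc k)) (map parrs us)"
    using k by (metis Cons_nth_drop_Suc length_map nth_map Suc_eq_plus1)
  have "drop k (map parrs us) = parrs (us!k) # parrs (us!(k+1)) # drop (k+2) (map parrs us)"
    using d1 d2 by simp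
  then have "take 2 (drop k (map parrs us)) = [parrs (us!k), parrs (us!(k+1))]" by simp
  then show ?thesis using concat_seg[of k "k+2" "map parrs us"] k unfolding Sf_def by (simp add: pcat_def)
qed

lemma p_min:
  assumes M: "monomial_algebra Q R" and I: "in_ideal Q R (pcat (us!m) (us!(m+1)))"
    and minq: "\<forall>q. is_suffix Q q (pcat (us!m) (us!(m+1))) \<and> q \<noteq> pcat (us!m) (us!(m+1)) \<longrightarrow> \<not> in_ideal Q R q"
    and m: "m+1 < length us" and o: "occ R (concat (map parrs us)) s t" and s: "Sf us m \<le> s"
  shows "Sf us (m+2) \<le> t"
proof (rule ccontr)
  assume "\<not> Sf us (m+2) \<le> t"
  then have t: "t \<le> Sf us (m+2)" "t < Sf us (m+2)" by simp_all
  define w where "w = pcat (us!m) (us!(m+1))"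
  define C where "C = concat (map parrs us)"
  have T: "\<forall>x\<in>arrs Q. tgt Q x \<in> verts Q" using M by (rule mono_tgt)
  have wp: "is_path Q w" using I unfolding w_def in_ideal_def by blast
  have le: "Sf us (m+2) \<le> length C" unfolding C_def by (rule Sf_le)
  have aw: "parrs w = take (Sf us (m+2) - Sf us m) (drop (Sf us m) C)"
    unfolding w_def C_def by (rule arrs_two[OF m])
  have ow: "occ R (parrs w) (s - Sf us m) (t - Sf us m)"
    unfolding aw using occ_restrict[OF o[folded C_def] s t(1) le] .
  define b where "b = t - Sf us m"
  have lw: "length (parrs w) = Sf us (m+2) - Sf us m" unfolding aw using le by simp
  have blt: "b < length (parrs w)" unfolding lw b_def using t(2) s ow unfolding occ_def by linarith
  define q where "q = seg Q w 0 b"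
  have suf: "is_suffix Q q w" unfolding q_def using prefix_suffix[OF M wp] blt by simp
  have lq: "length (parrs q) = b" unfolding q_def using blt by simp
  have ne: "q \<noteq> w" using lq blt by auto
  have qp: "is_path Q q" unfolding q_def using seg_path[OF wp T] blt by simp
  have oq0: "occ R (take (b-0) (drop 0 (parrs w))) (s - Sf us m - 0) (t - Sf us m - 0)"
    by (rule occ_restrict[OF ow]) (use blt in \<open>simp_all add: b_def\<close>)
  have "parrs q = take (b-0) (drop 0 (parrs w))" unfolding q_def by (rule parrs_seg)
  then have oq: "occ R (parrs q) (s - Sf us m - 0) (t - Sf us m - 0)" using oq0 by simp
  have "in_ideal Q R q" using conv_ideal[OF M qp oq] .
  then show False using minq suf ne unfolding w_def by blast
qed

lemma p_last:
  assumes M: "monomial_algebra Q R" and nz: "us!k \<in> nonzero_paths Q R" and k: "k < length us"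
    and o: "occ R (concat (map parrs us)) s t" and s: "Sf us k \<le> s" and t: "t \<le> Sf us (k+1)"
  shows False
proof -
  have le: "Sf us (k+1) \<le> length (concat (map parrs us))" by (rule Sf_le)
  have "occ R (parrs (us!k)) (s - Sf us k) (t - Sf us k)"
    unfolding arrs_one[OF k] using occ_restrict[OF o s t le] .
  moreover have "is_path Q (us!k)" using nz by (simp add: nonzero_paths_def)
  ultimately have "in_ideal Q R (us!k)" using conv_ideal[OF M] by blast
  then show False using nz by (simp add: nonzero_paths_def)
qed

lemma strict_pos:
  assumes nz: "us!m \<in> nonzero_paths Q R" and c: "composable Q (us!m) (us!(m+1))"
    and I: "in_ideal Q R (pcat (us!m) (us!(m+1)))" and m: "m+1 < length us"
  shows "Sf us (m+1) < Sf us (m+2)"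
proof -
  have "parrs (us!(m+1)) \<noteq> []"
  proof
    assume "parrs (us!(m+1)) = []"
    then have "pcat (us!m) (us!(m+1)) = us!m" using pcat_empty[OF c] by simp
    then show False using I nz by (simp add: nonzero_paths_def)
  qed
  then show ?thesis using Sf_Suc[of "m+1" us] m by (simp add: plen_def)
qed


lemma sub_occ:
  assumes M: "monomial_algebra Q R" and I: "in_ideal Q R (pcat (us!m) (us!(m+1)))"
    and m: "m+1 < length us" and L: "L = X @ concat (map parrs us) @ Y"
  shows "\<exists>s t. occ R L s t \<and> length X + Sf us m \<le> s \<and> t \<le> length X + Sf us (m+2)"
proof -
  define C where "C = concat (map parrs us)"
  obtain s t where o: "occ R (parrs (pcat (us!m) (us!(m+1)))) s t" using fwd_ideal[OF M I] by blast
  have le: "Sf us m \<le> Sf us (m+2)" "Sf us (m+2) \<le> length C"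
    unfolding C_def by (auto simp: Sf_mono Sf_le)
  have o1: "occ R (take (Sf us (m+2) - Sf us m) (drop (Sf us m) C)) s t"
    using o unfolding arrs_two[OF m] C_def .
  have o2: "occ R C (s + Sf us m) (t + Sf us m) \<and> t + Sf us m \<le> Sf us (m+2)"
    by (rule occ_lift[OF o1 le])
  have Ceq: "C = take ((length X + length C) - length X) (drop (length X) L)"
    using L unfolding C_def by simp
  have lL: "length X + length C \<le> length L" using L unfolding C_def by simp
  have o2c: "occ R (take ((length X + length C) - length X) (drop (length X) L)) (s + Sf us m) (t + Sf us m)"
    using Ceq o2[THEN conjunct1] by (rule subst[where P = "\<lambda>l. occ R l (s + Sf us m) (t + Sf us m)"])
  have o3: "occ R L (s + Sf us m + length X) (t + Sf us m + length X)"
    using occ_lift[OF o2c _ lL] by simp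
  show ?thesis using o2 o3 by (intro exI[of _ "s + Sf us m + length X"] exI[of _ "t + Sf us m + length X"]) auto
qed


lemma Sf_0[simp]: "Sf us 0 = 0" by (simp add: Sf_def)

lemma amb_basic:
  assumes "length us \<ge> 2" "plen (us!0) = 0" "plen (us!1) = 1"
  shows "Sf us 1 = 0" "Sf us 2 = 1"
proof -
  have "0 < length us" using assms(1) by linarith
  then show "Sf us 1 = 0" using Sf_Suc[of 0 us] assms by simp
  then show "Sf us 2 = 1" using Sf_Suc[of 1 us] assms by (simp add: numeral_2_eq_2)
qed

theorem mainTheorem11:
  fixes Q :: "('v, 'a) quiver" and R :: "('v, 'a) qpath set"
    and n i j :: int and p a b c q1 q2 :: "('v, 'a) qpath"
  assumes "monomial_algebra Q R"
    and "0 \<le> n" and "-1 \<le> i" and "i \<le> n" and "-1 \<le> j" and "j \<le> n"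
    and "p \<in> Gamma Q R n"
    and "composable Q c q2" and "composable Q q2 b" and "composable Q b q1" and "composable Q q1 a"
    and "p = pcat c (pcat q2 (pcat b (pcat q1 a)))"
    and "q1 \<in> Gamma Q R i" and "q2 \<in> Gamma Q R j"
  shows "i + j \<le> n - 1"
proof -
  note M = assms(1)
  consider "i = -1" | "j = -1" | "0 \<le> i" "0 \<le> j" using assms by linarith
  then show ?thesis
  proof cases
    case 1 then show ?thesis using assms by linarith
  next
    case 2 then show ?thesis using assms by linarith
  next
    case 3
    from assms(7) obtain us where
      us1: "length us = nat (n+2)" and us2: "\<forall>k<length us. us!k \<in> nonzero_paths Q R"
      and us4: "p = pcat_list us" and us5: "plen (us!0) = 0" and us6: "1 < length us \<longrightarrow> plen (us!1) = 1"
      and us7: "\<forall>m. 1 \<le> m \<and> Suc m < length us \<longrightarrow> in_ideal Q R (pcat (us!m) (us!Suc m))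
           \<and> (\<forall>q. is_suffix Q q (pcat (us!m) (us!Suc m)) \<and> q \<noteq> pcat (us!m) (us!Suc m) \<longrightarrow> \<not> in_ideal Q R q)"
      unfolding Gamma_def left_amb_def by blast
    from assms(13) obtain vs where
      vs1: "length vs = nat (i+2)" and vs2: "\<forall>k<length vs. vs!k \<in> nonzero_paths Q R"
      and vs3: "\<forall>k. Suc k < length vs \<longrightarrow> composable Q (vs!k) (vs!Suc k)"
      and vs4: "q1 = pcat_list vs" and vs5: "plen (vs!0) = 0" and vs6: "1 < length vs \<longrightarrow> plen (vs!1) = 1"
      and vs7: "\<forall>m. 1 \<le> m \<and> Suc m < length vs \<longrightarrow> in_ideal Q R (pcat (vs!m) (vs!Suc m))"
      unfolding Gamma_def left_amb_def by blast
    from assms(14) obtain ws where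
      ws1: "length ws = nat (j+2)"
      and ws4: "q2 = pcat_list ws" and ws5: "plen (ws!0) = 0" and ws6: "1 < length ws \<longrightarrow> plen (ws!1) = 1"
      and ws7: "\<forall>m. 1 \<le> m \<and> Suc m < length ws \<longrightarrow> in_ideal Q R (pcat (ws!m) (ws!Suc m))"
      unfolding Gamma_def left_amb_def by blast
    define K where "K = nat (n+1)"
    define I where "I = nat (i+1)"
    define J where "J = nat (j+1)"
    have lus: "length us = K+1" "length vs = I+1" "length ws = J+1"
      using us1 vs1 ws1 3 assms(2) unfolding K_def I_def J_def by auto
    have K1: "1 \<le> K" "1 \<le> I" "1 \<le> J" "J \<le> K" using 3 assms unfolding K_def I_def J_def by auto
    define L where "L = concat (map parrs us)"
    have pL: "parrs p = L" unfolding L_def us4 using lus by (intro pcat_list_arrs) auto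
    have q1L: "parrs q1 = concat (map parrs vs)" unfolding vs4 using lus by (intro pcat_list_arrs) auto
    have q2L: "parrs q2 = concat (map parrs ws)" unfolding ws4 using lus by (intro pcat_list_arrs) auto
    have Ldec: "L = parrs c @ parrs q2 @ parrs b @ parrs q1 @ parrs a"
      using pL assms(12) by (simp add: pcat_def)
    define X1 where "X1 = parrs c @ parrs q2 @ parrs b"
    define X2 where "X2 = parrs c"
    have L1: "L = X1 @ concat (map parrs vs) @ parrs a" using Ldec q1L X1_def by simp
    have L2: "L = X2 @ concat (map parrs ws) @ (parrs b @ parrs q1 @ parrs a)" using Ldec q2L X2_def by simp
    define E where "E = (\<lambda>k. Sf us (k+1))"
    define G where "G = (\<lambda>k. length X1 + Sf vs (k+1))"
    define H where "H = (\<lambda>k. length X2 + Sf ws (k+1))"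
    have bu: "Sf us 1 = 0" "Sf us 2 = 1" using amb_basic[of us] us5 us6 lus K1 by auto
    have bv: "Sf vs 1 = 0" "Sf vs 2 = 1" using amb_basic[of vs] vs5 vs6 lus K1 by auto
    have bw: "Sf ws 1 = 0" "Sf ws 2 = 1" using amb_basic[of ws] ws5 ws6 lus K1 by auto
    have Emin: "E (m+1) \<le> t" if "1 \<le> m" "m+1 \<le> K" "occ R L s t" "E (m-1) \<le> s" for m s t
    proof -
      have m: "m+1 < length us" using that lus by simp
      have s: "Sf us m \<le> s" using that unfolding E_def by simp
      have "Sf us (m+2) \<le> t"
        using p_min[OF M _ _ m that(3)[unfolded L_def] s] us7 that(1) m by simp
      then show ?thesis unfolding E_def by (simp add: numeral_2_eq_2)
    qed
    have Elast: False if "occ R L s t" "E (K-1) \<le> s" "t \<le> E K" for s t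
    proof -
      have k: "K < length us" using lus by simp
      show False using p_last[OF M _ k that(1)[unfolded L_def]] us2 k that K1 unfolding E_def by simp
    qed
    have EK: "E K = length L" unfolding E_def L_def using Sf_all[of us] lus by simp
    have Hocc: "\<exists>s t. occ R L s t \<and> H (m-1) \<le> s \<and> t \<le> H (m+1)" if "1 \<le> m" "m+1 \<le> J" for m
    proof -
      have m: "m+1 < length ws" using that lus by simp
      have ii: "in_ideal Q R (pcat (ws!m) (ws!(m+1)))" using ws7 that(1) m by simp
      obtain s t where st: "occ R L s t" "length X2 + Sf ws m \<le> s" "t \<le> length X2 + Sf ws (m+2)"
        using sub_occ[OF M ii m L2] by blast
      show ?thesis using st that unfolding H_def by (intro exI[of _ s] exI[of _ t]) (simp add: numeral_2_eq_2)
    qed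
    have EH: "E J \<le> H J"
    proof (rule core2[where occ = "occ R L" and K = K and E = E and H = H and J = J and x = J])
      show "E 0 \<le> H 0" "E 1 \<le> H 1" using bu bw unfolding E_def H_def by (simp_all add: numeral_2_eq_2)
    qed (use Emin Hocc K1 in auto)
    have HJ: "H J = length X2 + length (parrs q2)" unfolding H_def q2L using Sf_all[of ws] lus by simp
    have G0: "G 0 = length X1" unfolding G_def using bv by simp
    have G1: "G 1 = G 0 + 1" unfolding G_def using bv by (simp add: numeral_2_eq_2)
    have Gocc: "\<exists>s t. occ R L s t \<and> G (m-1) \<le> s \<and> t \<le> G (m+1)" if "1 \<le> m" "m+1 \<le> I" for m
    proof -
      have m: "m+1 < length vs" using that lus by simp
      have ii: "in_ideal Q R (pcat (vs!m) (vs!(m+1)))" using vs7 that(1) m by simp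
      obtain s t where st: "occ R L s t" "length X1 + Sf vs m \<le> s" "t \<le> length X1 + Sf vs (m+2)"
        using sub_occ[OF M ii m L1] by blast
      show ?thesis using st that unfolding G_def by (intro exI[of _ s] exI[of _ t]) (simp add: numeral_2_eq_2)
    qed
    have Gstrict: "G m < G (m+1)" if "1 \<le> m" "m+1 \<le> I" for m
    proof -
      have m: "m+1 < length vs" using that lus by simp
      have "Sf vs (m+1) < Sf vs (m+2)"
        by (rule strict_pos[OF _ _ _ m]) (use vs2 vs3 vs7 that m in auto)
      then show ?thesis unfolding G_def by (simp add: numeral_2_eq_2)
    qed
    have GN: "G x \<le> length L" if "x \<le> I" for x
      using Sf_le[of vs "x+1"] L1 unfolding G_def by simp
    have EJG: "E J \<le> G 0" using EH HJ G0 unfolding X1_def X2_def by simp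
    have "I + J \<le> K"
    proof (rule core[where occ = "occ R L" and N = "length L" and E = E and G = G and K = K and I = I and J = J])
      show "\<And>s t. occ R L s t \<Longrightarrow> s < t \<and> t \<le> length L" by (simp add: occ_def)
      show "\<And>s t. occ R L s t \<Longrightarrow> E (K-1) \<le> s \<Longrightarrow> t \<le> E K \<Longrightarrow> False" using Elast by blast
    qed (use EK Emin K1 EJG G1 Gocc Gstrict GN in auto)
    then show ?thesis using 3 assms unfolding I_def J_def K_def by linarith
  qed
qed

end
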